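(* Let $G$ be a connected graph with $\dim(G)=n(G)-2\ge 2$, and let $\ell\ge 1$ be an integer. Then $D(G)=n(G)-\ell$ if and only if $G$ is isomorphic to one of the following graphs: (a) $K_{\ell+1,\ell+1}$; (b) $K_{t,\ell}$ with $t\ge \ell+1$; (c) $K_\ell+\overline{K_t}$ with $t\ge \ell$; (d) $K_t+\overline{K_\ell}$ with $t\ge \ell\ge 2$; (e) $K_{\ell-1}+(K_t\cup K_1)$ with $t\ge \max\{2,\ell-1\}$; (f) $K_t+(K_{\ell-1}\cup K_1)$ with $t\ge\max\{2,\ell-1\}$.
   Context: All graphs are finite and simple; $n(G)=|V(G)|$. For a connected graph $G$ with shortest-path distance $d_G$, a set $S\subseteq V(G)$ is resolving if for any two distinct vertices $x,y$ there is $s\in S$ with $d_G(x,s)\neq d_G(y,s)$; the metric dimension $\dim(G)$ is the minimum size of a resolving set. A distinguishing coloring of a graph $G$ is a (not necessarily proper) vertex coloring such that the only automorphism of $G$ mapping every vertex to a vertex of the same color is the identity; the distinguishing number $D(G)$ is the minimum number of colors in a distinguishing coloring of $G$. $K_{s,t}$ is the complete bipartite graph, $\overline{K_t}$ the edgeless graph on $t$ vertices, $G\cup H$ the disjoint union, and the join $G+H$ is obtained from $G\cup H$ by adding all edges between $V(G)$ and $V(H)$. *)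

theory Defs
  imports Main
begin

type_synonym 'a graph = "'a set \<times> ('a \<Rightarrow> 'a \<Rightarrow> bool)"

definition verts :: "'a graph \<Rightarrow> 'a set" where "verts G = fst G"
definition adj :: "'a graph \<Rightarrow> 'a \<Rightarrow> 'a \<Rightarrow> bool" where "adj G = snd G"

definition simple_graph :: "'a graph \<Rightarrow> bool" where
  "simple_graph G \<longleftrightarrow> finite (verts G) \<and>
     (\<forall>x y. adj G x y \<longrightarrow> x \<in> verts G \<and> y \<in> verts G \<and> x \<noteq> y \<and> adj G y x)"

definition order :: "'a graph \<Rightarrow> nat" where "order G = card (verts G)"

fun is_walk :: "'a graph \<Rightarrow> 'a list \<Rightarrow> bool" where
  "is_walk G [] = False"
| "is_walk G [x] = (x \<in> verts G)"
| "is_walk G (x # y # xs) = (x \<in> verts G \<and> adj G x y \<and> is_walk G (y # xs))"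

definition connected_graph :: "'a graph \<Rightarrow> bool" where
  "connected_graph G \<longleftrightarrow> verts G \<noteq> {} \<and>
     (\<forall>x\<in>verts G. \<forall>y\<in>verts G. \<exists>w. is_walk G w \<and> hd w = x \<and> last w = y)"

definition gdist :: "'a graph \<Rightarrow> 'a \<Rightarrow> 'a \<Rightarrow> nat" where
  "gdist G x y = (LEAST n. \<exists>w. is_walk G w \<and> hd w = x \<and> last w = y \<and> length w = Suc n)"

definition resolving :: "'a graph \<Rightarrow> 'a set \<Rightarrow> bool" where
  "resolving G S \<longleftrightarrow> S \<subseteq> verts G \<and>
     (\<forall>x\<in>verts G. \<forall>y\<in>verts G. x \<noteq> y \<longrightarrow> (\<exists>s\<in>S. gdist G x s \<noteq> gdist G y s))"

definition metric_dim :: "'a graph \<Rightarrow> nat" where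
  "metric_dim G = (LEAST k. \<exists>S. resolving G S \<and> card S = k)"

definition automorphism :: "'a graph \<Rightarrow> ('a \<Rightarrow> 'a) \<Rightarrow> bool" where
  "automorphism G f \<longleftrightarrow> bij_betw f (verts G) (verts G) \<and>
     (\<forall>x\<in>verts G. \<forall>y\<in>verts G. adj G x y \<longleftrightarrow> adj G (f x) (f y))"

definition distinguishing :: "'a graph \<Rightarrow> ('a \<Rightarrow> nat) \<Rightarrow> bool" where
  "distinguishing G c \<longleftrightarrow> (\<forall>f. automorphism G f \<and> (\<forall>x\<in>verts G. c (f x) = c x)
      \<longrightarrow> (\<forall>x\<in>verts G. f x = x))"

definition distinguishing_number :: "'a graph \<Rightarrow> nat" where
  "distinguishing_number G = (LEAST k. \<exists>c. c ` verts G \<subseteq> {..<k} \<and> distinguishing G c)"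

definition isomorphic :: "'a graph \<Rightarrow> 'b graph \<Rightarrow> bool" where
  "isomorphic G H \<longleftrightarrow> (\<exists>f. bij_betw f (verts G) (verts H) \<and>
     (\<forall>x\<in>verts G. \<forall>y\<in>verts G. adj G x y \<longleftrightarrow> adj H (f x) (f y)))"

definition complete :: "nat \<Rightarrow> nat graph" where
  "complete t = ({..<t}, \<lambda>x y. x < t \<and> y < t \<and> x \<noteq> y)"

definition edgeless :: "nat \<Rightarrow> nat graph" where
  "edgeless t = ({..<t}, \<lambda>x y. False)"

definition complete_bipartite :: "nat \<Rightarrow> nat \<Rightarrow> (nat + nat) graph" where
  "complete_bipartite s t = (Inl ` {..<s} \<union> Inr ` {..<t},
     \<lambda>x y. (\<exists>i j. i < s \<and> j < t \<and> ((x = Inl i \<and> y = Inr j) \<or> (x = Inr j \<and> y = Inl i))))"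

definition gunion :: "'a graph \<Rightarrow> 'b graph \<Rightarrow> ('a + 'b) graph" where
  "gunion G H = (Inl ` verts G \<union> Inr ` verts H,
     \<lambda>x y. case (x, y) of
        (Inl a, Inl b) \<Rightarrow> adj G a b
      | (Inr a, Inr b) \<Rightarrow> adj H a b
      | _ \<Rightarrow> False)"

definition gjoin :: "'a graph \<Rightarrow> 'b graph \<Rightarrow> ('a + 'b) graph" where
  "gjoin G H = (Inl ` verts G \<union> Inr ` verts H,
     \<lambda>x y. case (x, y) of
        (Inl a, Inl b) \<Rightarrow> adj G a b
      | (Inr a, Inr b) \<Rightarrow> adj H a b
      | (Inl a, Inr b) \<Rightarrow> a \<in> verts G \<and> b \<in> verts H
      | (Inr a, Inl b) \<Rightarrow> a \<in> verts H \<and> b \<in> verts G)"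

end

theory Submission
  imports Defs
begin

lemma sg_adjD:
  assumes "simple_graph G" "adj G x y"
  shows "x \<in> verts G" "y \<in> verts G" "x \<noteq> y" "adj G y x"
  using assms unfolding simple_graph_def by auto

lemma sg_fin: "simple_graph G \<Longrightarrow> finite (verts G)"
  unfolding simple_graph_def by auto

lemma walk_nonempty: "is_walk G w \<Longrightarrow> w \<noteq> []"
  by (cases w) auto

lemma walk_hd_in: "is_walk G w \<Longrightarrow> hd w \<in> verts G"
  by (induct G w rule: is_walk.induct) auto

lemma walk_tl: "is_walk G (x # y # xs) \<Longrightarrow> is_walk G (y # xs)"
  by simp

definition W :: "'a graph \<Rightarrow> 'a \<Rightarrow> 'a \<Rightarrow> nat \<Rightarrow> bool" where
  "W G x y n \<longleftrightarrow> (\<exists>w. is_walk G w \<and> hd w = x \<and> last w = y \<and> length w = Suc n)"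

lemma gdist_W: "gdist G x y = (LEAST n. W G x y n)"
  unfolding gdist_def W_def by simp

lemma conn_W:
  assumes "connected_graph G" "x \<in> verts G" "y \<in> verts G"
  shows "\<exists>n. W G x y n"
proof -
  obtain w where w: "is_walk G w" "hd w = x" "last w = y"
    using assms unfolding connected_graph_def by blast
  then have "w \<noteq> []" using walk_nonempty by blast
  then have "length w = Suc (length w - 1)" by (cases w) auto
  then show ?thesis using w unfolding W_def by blast
qed

lemma gdist_W_ex:
  assumes "connected_graph G" "x \<in> verts G" "y \<in> verts G"
  shows "W G x y (gdist G x y)"
  unfolding gdist_W using conn_W[OF assms] by (rule LeastI_ex)

lemma gdist_le: "W G x y n \<Longrightarrow> gdist G x y \<le> n"
  unfolding gdist_W by (rule Least_le)

lemma gdist_refl: "x \<in> verts G \<Longrightarrow> gdist G x x = 0"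
proof -
  assume "x \<in> verts G"
  then have "W G x x 0" unfolding W_def by (intro exI[of _ "[x]"]) auto
  then show ?thesis using gdist_le by fastforce
qed

lemma gdist_0:
  assumes "connected_graph G" "x \<in> verts G" "y \<in> verts G" "gdist G x y = 0"
  shows "x = y"
proof -
  from gdist_W_ex[OF assms(1-3)] assms(4) obtain w where
    "is_walk G w" "hd w = x" "last w = y" "length w = 1" unfolding W_def by auto
  then show ?thesis by (cases w) auto
qed

lemma gdist_1_iff:
  assumes "simple_graph G" "connected_graph G" "x \<in> verts G" "y \<in> verts G" "x \<noteq> y"
  shows "gdist G x y = 1 \<longleftrightarrow> adj G x y"
proof
  assume "adj G x y"
  then have "W G x y 1" unfolding W_def using sg_adjD[OF assms(1)]
    by (intro exI[of _ "[x,y]"]) auto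
  then have "gdist G x y \<le> 1" by (rule gdist_le)
  moreover have "gdist G x y \<noteq> 0" using gdist_0[OF assms(2-4)] assms(5) by auto
  ultimately show "gdist G x y = 1" by simp
next
  assume "gdist G x y = 1"
  with gdist_W_ex[OF assms(2-4)] obtain w where
    w: "is_walk G w" "hd w = x" "last w = y" "length w = 2" unfolding W_def by auto
  then obtain a b where "w = [a,b]"
    by (cases w; cases "tl w") auto
  then show "adj G x y" using w by auto
qed

lemma gdist_2:
  assumes "connected_graph G" "x \<in> verts G" "y \<in> verts G" "gdist G x y = 2"
  shows "\<exists>z. adj G x z \<and> adj G z y"
proof -
  from gdist_W_ex[OF assms(1-3)] assms(4) obtain w where
    w: "is_walk G w" "hd w = x" "last w = y" "length w = 3" unfolding W_def by auto
  then obtain a b c where "w = [a,b,c]"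
    by (cases w; cases "tl w"; cases "tl (tl w)") auto
  then show ?thesis using w by auto
qed

lemma gdist_succ:
  assumes "simple_graph G" "connected_graph G" "x \<in> verts G" "y \<in> verts G"
    "gdist G x y = Suc k"
  shows "\<exists>z. adj G x z \<and> gdist G z y = k"
proof -
  from gdist_W_ex[OF assms(2-4)] assms(5) obtain w where
    w: "is_walk G w" "hd w = x" "last w = y" "length w = Suc (Suc k)" unfolding W_def by auto
  then obtain z r where wz: "w = x # z # r"
    by (cases w; cases "tl w") auto
  have "is_walk G (z # r)" using w wz by simp
  then have Wz: "W G z y k" unfolding W_def using w wz by (intro exI[of _ "z # r"]) auto
  have adj: "adj G x z" using w wz by simp
  have z: "z \<in> verts G" using sg_adjD[OF assms(1) adj] by simp
  have le: "gdist G z y \<le> k" using gdist_le[OF Wz] .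
  obtain v where v: "is_walk G v" "hd v = z" "last v = y" "length v = Suc (gdist G z y)"
    using gdist_W_ex[OF assms(2) z assms(4)] unfolding W_def by auto
  have "v \<noteq> []" using walk_nonempty v(1) by blast
  then obtain v1 vs where vv: "v = v1 # vs" by (cases v) auto
  have "W G x y (Suc (gdist G z y))" unfolding W_def
    using v vv adj assms(3) by (intro exI[of _ "x # v"]) auto
  then have "Suc k \<le> Suc (gdist G z y)" using gdist_le assms(5) by metis
  then show ?thesis using le adj by (intro exI[of _ z]) auto
qed


locale dimG =
  fixes G :: "'a graph"
  assumes sg: "simple_graph G" and cg: "connected_graph G"
    and dim: "metric_dim G = order G - 2" and ord: "order G - 2 \<ge> 2"
begin

abbreviation "V \<equiv> verts G"
abbreviation "A \<equiv> adj G"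

lemma finV: "finite V" using sg_fin[OF sg] .

lemma adjD: "A x y \<Longrightarrow> x \<in> V" "A x y \<Longrightarrow> y \<in> V" "A x y \<Longrightarrow> x \<noteq> y" "A x y \<Longrightarrow> A y x"
  using sg_adjD[OF sg] by blast+

lemma card_V: "card V \<ge> 4" using ord unfolding order_def by simp

lemma resolving_card: "resolving G S \<Longrightarrow> card V - 2 \<le> card S"
  using dim unfolding metric_dim_def order_def
  by (metis (mono_tags, lifting) Least_le)

lemma gd0: "x \<in> V \<Longrightarrow> y \<in> V \<Longrightarrow> x \<noteq> y \<Longrightarrow> gdist G x y \<noteq> 0"
  using gdist_0[OF cg] by blast

lemma V_resolving: "resolving G V"
  unfolding resolving_def using gdist_refl gd0 by (metis subset_refl)

lemma ex_resolving: "\<exists>S. resolving G S \<and> card S = card V - 2"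
proof -
  have "\<exists>S. resolving G S \<and> card S = metric_dim G"
    unfolding metric_dim_def
    by (rule LeastI_ex[where P="\<lambda>k. \<exists>S. resolving G S \<and> card S = k"]) (use V_resolving in blast)
  then show ?thesis using dim unfolding order_def by simp
qed

lemma triple_bad:
  assumes "x \<in> V" "y \<in> V" "z \<in> V" "x \<noteq> y" "x \<noteq> z" "y \<noteq> z"
    and "\<And>p q. p \<in> {x,y,z} \<Longrightarrow> q \<in> {x,y,z} \<Longrightarrow> p \<noteq> q \<Longrightarrow>
           \<exists>s\<in>V - {x,y,z}. gdist G p s \<noteq> gdist G q s"
  shows False
proof -
  let ?S = "V - {x,y,z}"
  have "resolving G ?S"
    unfolding resolving_def
  proof (intro conjI ballI impI)
    fix p q assume pq: "p \<in> V" "q \<in> V" "p \<noteq> q"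
    show "\<exists>s\<in>?S. gdist G p s \<noteq> gdist G q s"
    proof (cases "p \<in> ?S")
      case True
      then show ?thesis using gdist_refl gd0 pq by (metis)
    next
      case F1: False
      show ?thesis
      proof (cases "q \<in> ?S")
        case True
        then show ?thesis using gdist_refl gd0 pq by (metis)
      next
        case False
        then show ?thesis using F1 assms(7) pq by blast
      qed
    qed
  qed auto
  then have "card V - 2 \<le> card ?S" by (rule resolving_card)
  moreover have "card ?S = card V - 3" using assms finV
    by (simp add: card_Diff_subset)
  ultimately show False using card_V by simp
qed

lemma noncomplete: "\<exists>x\<in>V. \<exists>y\<in>V. x \<noteq> y \<and> \<not> A x y"
proof (rule ccontr)
  assume C: "\<not> ?thesis"
  obtain S where S: "resolving G S" "card S = card V - 2" using ex_resolving by blast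
  have SV: "S \<subseteq> V" using S unfolding resolving_def by auto
  have "card (V - S) = 2" using S SV finV card_V by (simp add: card_Diff_subset finite_subset)
  then obtain x y where xy: "V - S = {x,y}" "x \<noteq> y" by (meson card_2_iff)
  then have "x \<in> V" "y \<in> V" "x \<notin> S" "y \<notin> S" by auto
  then have "\<forall>s\<in>S. gdist G x s = gdist G y s"
    using gdist_1_iff[OF sg cg] C SV by (metis subsetD)
  then show False using S xy \<open>x \<in> V\<close> \<open>y \<in> V\<close> unfolding resolving_def by blast
qed

lemma diam2:
  assumes "x \<in> V" "y \<in> V" "x \<noteq> y" "\<not> A x y"
  shows "\<exists>w. A x w \<and> A w y"
proof (rule ccontr)
  assume nw: "\<not> ?thesis"
  let ?d = "gdist G x y"
  have "?d \<noteq> 0" using gd0 assms by blast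
  moreover have "?d \<noteq> 1" using gdist_1_iff[OF sg cg assms(1-3)] assms(4) by blast
  moreover have "?d \<noteq> 2" using gdist_2[OF cg assms(1,2)] nw by blast
  ultimately obtain k where k: "?d = Suc (Suc (Suc k))"
    by (metis One_nat_def Suc_1 not0_implies_Suc)
  obtain z1 where z1: "A x z1" "gdist G z1 y = Suc (Suc k)"
    using gdist_succ[OF sg cg assms(1,2) k] by blast
  have z1V: "z1 \<in> V" using adjD z1 by blast
  obtain z2 where z2: "A z1 z2" "gdist G z2 y = Suc k"
    using gdist_succ[OF sg cg z1V assms(2) z1(2)] by blast
  have z2V: "z2 \<in> V" using adjD z2 by blast
  have yy: "gdist G y y = 0" by (rule gdist_refl[OF assms(2)])
  have yn: "y \<noteq> x" "y \<noteq> z1" "y \<noteq> z2" using yy k z1 z2 by auto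
  have dist: "x \<noteq> z1" "x \<noteq> z2" "z1 \<noteq> z2" using k z1 z2 by auto
  show False
  proof (rule triple_bad[OF assms(1) z1V z2V dist])
    fix p q assume "p \<in> {x,z1,z2}" "q \<in> {x,z1,z2}" "p \<noteq> q"
    then have "gdist G p y \<noteq> gdist G q y" using k z1 z2 by auto
    then show "\<exists>s\<in>V - {x,z1,z2}. gdist G p s \<noteq> gdist G q s"
      using yn assms(2) by blast
  qed
qed

lemma T:
  assumes "x \<in> V" "y \<in> V" "z \<in> V" "x \<noteq> y" "x \<noteq> z" "y \<noteq> z"
  shows "\<exists>p q. p \<in> {x,y,z} \<and> q \<in> {x,y,z} \<and> p \<noteq> q \<and>
           (\<forall>s\<in>V - {x,y,z}. A p s \<longleftrightarrow> A q s)"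
proof (rule ccontr)
  assume nT: "\<not> ?thesis"
  show False
  proof (rule triple_bad[OF assms])
    fix p q assume pq: "p \<in> {x,y,z}" "q \<in> {x,y,z}" "p \<noteq> q"
    then obtain s where s: "s \<in> V - {x,y,z}" "A p s \<noteq> A q s" using nT by blast
    have "p \<in> V" "q \<in> V" "p \<noteq> s" "q \<noteq> s" using pq assms s by auto
    then have "gdist G p s \<noteq> gdist G q s"
      using gdist_1_iff[OF sg cg] s by (metis DiffD1)
    then show "\<exists>s\<in>V - {x,y,z}. gdist G p s \<noteq> gdist G q s" using s by blast
  qed
qed

lemma bad:
  assumes "x \<in> V" "y \<in> V" "z \<in> V" "x \<noteq> y" "x \<noteq> z" "y \<noteq> z"
    and "s1 \<in> V" "s1 \<notin> {x,y,z}" "A x s1 \<noteq> A y s1"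
    and "s2 \<in> V" "s2 \<notin> {x,y,z}" "A x s2 \<noteq> A z s2"
    and "s3 \<in> V" "s3 \<notin> {x,y,z}" "A y s3 \<noteq> A z s3"
  shows False
  using T[OF assms(1-6)] assms(7-) by auto

end


definition S1 :: "'a graph \<Rightarrow> 'a set \<Rightarrow> 'a set \<Rightarrow> bool" where
  "S1 G P Q \<longleftrightarrow> verts G = P \<union> Q \<and> P \<inter> Q = {} \<and>
     (\<forall>x y. adj G x y \<longleftrightarrow> (x \<in> P \<and> y \<in> Q) \<or> (x \<in> Q \<and> y \<in> P))"

definition SJ :: "'a graph \<Rightarrow> 'a set \<Rightarrow> 'a set \<Rightarrow> 'a set \<Rightarrow> bool" where
  "SJ G X Y Z \<longleftrightarrow> verts G = X \<union> Y \<union> Z \<and> X \<inter> Y = {} \<and> X \<inter> Z = {} \<and> Y \<inter> Z = {} \<and>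
     (\<forall>x y. adj G x y \<longleftrightarrow> x \<in> verts G \<and> y \<in> verts G \<and> x \<noteq> y \<and>
        (x \<in> X \<or> y \<in> X \<or> (x \<in> Y \<and> y \<in> Y)))"

context dimG
begin

lemma noP4:
  assumes "A a b" "A b c" "A c d" "\<not> A a c" "\<not> A b d" "\<not> A a d"
  shows False
proof -
  have V: "a \<in> V" "b \<in> V" "c \<in> V" "d \<in> V" using adjD assms by blast+
  have ad: "a \<noteq> d" using assms(1,5) adjD(4) by blast
  then obtain w where w: "A a w" "A w d" using diam2[OF V(1,4)] assms(6) by blast
  have wV: "w \<in> V" using adjD w by blast
  have wa: "w \<noteq> a" using adjD(3)[OF w(1)] by simp
  have wb: "w \<noteq> b" using w(2) assms(5) by blast
  have ab: "a \<noteq> b" using adjD(3)[OF assms(1)] .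
  have dn: "d \<noteq> w" "d \<noteq> a" "d \<noteq> b" using adjD(3)[OF w(2)] ad assms(1,5) adjD(3)[OF assms(3)] assms(2,6) by auto
  have cn: "c \<noteq> w" "c \<noteq> a" "c \<noteq> b" using w(1) assms(3,4,6) adjD(4) adjD(3)[OF assms(2)] by auto
  show False
    by (rule bad[of w a b d d c]) (simp_all add: V wV wa wb ab dn cn w assms)
qed

definition ag :: "'a \<Rightarrow> 'a \<Rightarrow> bool" where
  "ag x y \<longleftrightarrow> (\<forall>s\<in>V. s \<noteq> x \<and> s \<noteq> y \<longrightarrow> (A x s \<longleftrightarrow> A y s))"

definition U :: "'a set" where "U = {u\<in>V. \<forall>v\<in>V. v \<noteq> u \<longrightarrow> A u v}"

lemma U_adj: "u \<in> U \<Longrightarrow> v \<in> V \<Longrightarrow> v \<noteq> u \<Longrightarrow> A u v \<and> A v u"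
  unfolding U_def using adjD by blast

lemma nonU: "x \<in> V \<Longrightarrow> x \<notin> U \<Longrightarrow> \<exists>m\<in>V. m \<noteq> x \<and> \<not> A x m"
  unfolding U_def by blast

lemma R1:
  assumes u: "u \<in> U" and x: "x \<in> V" "x \<notin> U" and y: "y \<in> V" "y \<notin> U" and xy: "x \<noteq> y"
  shows "ag x y \<or> (\<not> A x y \<and> ((\<forall>s\<in>V. s \<noteq> x \<and> s \<noteq> y \<longrightarrow> A x s) \<or>
                                (\<forall>s\<in>V. s \<noteq> x \<and> s \<noteq> y \<longrightarrow> A y s)))"
proof -
  have uV: "u \<in> V" using u unfolding U_def by auto
  have ux: "u \<noteq> x" "u \<noteq> y" using u x y by auto
  obtain p q where pq: "p \<in> {u,x,y}" "q \<in> {u,x,y}" "p \<noteq> q"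
    and ag3: "\<forall>s\<in>V - {u,x,y}. A p s \<longleftrightarrow> A q s"
    using T[OF uV x(1) y(1) ux xy] by blast
  have Uall: "\<forall>s\<in>V. s \<noteq> u \<longrightarrow> A u s" using u unfolding U_def by auto
  have xu: "A x u" "A y u" using U_adj[OF u] x y ux by auto
  have case1: "\<forall>s\<in>V. s \<noteq> x \<and> s \<noteq> y \<longrightarrow> A x s" if h: "\<forall>s\<in>V - {u,x,y}. A u s \<longleftrightarrow> A x s"
  proof (intro ballI impI)
    fix s assume s: "s \<in> V" "s \<noteq> x \<and> s \<noteq> y"
    show "A x s"
    proof (cases "s = u")
      case True then show ?thesis using xu by simp
    next
      case False then show ?thesis using h s Uall by auto
    qed
  qed
  have case2: "\<forall>s\<in>V. s \<noteq> x \<and> s \<noteq> y \<longrightarrow> A y s" if h: "\<forall>s\<in>V - {u,x,y}. A u s \<longleftrightarrow> A y s"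
  proof (intro ballI impI)
    fix s assume s: "s \<in> V" "s \<noteq> x \<and> s \<noteq> y"
    show "A y s"
    proof (cases "s = u")
      case True then show ?thesis using xu by simp
    next
      case False then show ?thesis using h s Uall by auto
    qed
  qed
  have case3: "ag x y" if h: "\<forall>s\<in>V - {u,x,y}. A x s \<longleftrightarrow> A y s"
    unfolding ag_def
  proof (intro ballI impI)
    fix s assume s: "s \<in> V" "s \<noteq> x \<and> s \<noteq> y"
    show "A x s \<longleftrightarrow> A y s"
    proof (cases "s = u")
      case True then show ?thesis using xu by simp
    next
      case False then show ?thesis using h s by auto
    qed
  qed
  have nx: "\<not> A x y" if "\<forall>s\<in>V. s \<noteq> x \<and> s \<noteq> y \<longrightarrow> A x s"
    using that nonU[OF x] by metis
  have ny: "\<not> A x y" if "\<forall>s\<in>V. s \<noteq> x \<and> s \<noteq> y \<longrightarrow> A y s"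
    using that nonU[OF y] adjD(4) by metis
  from pq ag3 have "(\<forall>s\<in>V - {u,x,y}. A u s \<longleftrightarrow> A x s) \<or> (\<forall>s\<in>V - {u,x,y}. A u s \<longleftrightarrow> A y s)
     \<or> (\<forall>s\<in>V - {u,x,y}. A x s \<longleftrightarrow> A y s)"
    by (elim insertE emptyE; simp; metis)
  then show ?thesis using case1 case2 case3 nx ny by blast
qed

end


context dimG
begin

lemma classify_U:
  assumes u: "u \<in> U"
  shows "(\<exists>X Z. SJ G X {} Z \<and> card Z \<ge> 2) \<or> (\<exists>X Y c. SJ G X Y {c} \<and> card Y \<ge> 2)"
proof -
  let ?R = "V - U"
  have UV: "U \<subseteq> V" unfolding U_def by auto
  obtain x0 y0 where xy0: "x0 \<in> V" "y0 \<in> V" "x0 \<noteq> y0" "\<not> A x0 y0" using noncomplete by blast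
  have x0R: "x0 \<notin> U" "y0 \<notin> U" using xy0 U_adj by blast+
  show ?thesis
  proof (cases "\<forall>x\<in>?R. \<forall>y\<in>?R. \<not> A x y")
    case True
    have "SJ G U {} ?R" unfolding SJ_def
    proof (intro conjI allI)
      fix x y show "A x y \<longleftrightarrow> x \<in> V \<and> y \<in> V \<and> x \<noteq> y \<and> (x \<in> U \<or> y \<in> U \<or> (x \<in> {} \<and> y \<in> {}))"
        using True adjD U_adj by blast
    qed (use UV in auto)
    moreover have "card ?R \<ge> 2"
    proof -
      have "{x0,y0} \<subseteq> ?R" using xy0 x0R by auto
      then have "card {x0,y0} \<le> card ?R" using finV by (intro card_mono) auto
      then show ?thesis using xy0 by simp
    qed
    ultimately show ?thesis by blast
  next
    case False
    then obtain x1 x2 where x12: "x1 \<in> ?R" "x2 \<in> ?R" "A x1 x2" by blast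
    obtain c where c: "c \<in> V" "c \<noteq> x1" "\<not> A x1 c" using nonU x12 by blast
    have cR: "c \<notin> U" using c U_adj x12 by blast
    have x2n: "x2 \<noteq> x1" "x2 \<noteq> c" using x12 c adjD by auto
    define B where "B = {y\<in>?R. y = x1 \<or> A x1 y}"
    have agB: "ag x1 y" if "y \<in> B" "y \<noteq> x1" for y
      using R1[OF u, of x1 y] that x12 unfolding B_def by auto
    have ag12: "ag x1 x2" using agB x12 x2n unfolding B_def by auto
    have nag: "\<not> ag x1 c"
    proof
      assume "ag x1 c"
      then have "A c x2" using x12 x2n adjD unfolding ag_def by blast
      then have "A x2 c" using adjD by blast
      then have "A x1 c" using ag12 x2n c unfolding ag_def by (metis adjD(2))
      then show False using c by blast
    qed
    have x1all: "\<forall>s\<in>V. s \<noteq> x1 \<and> s \<noteq> c \<longrightarrow> A x1 s"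
    proof -
      have "(\<forall>s\<in>V. s \<noteq> x1 \<and> s \<noteq> c \<longrightarrow> A x1 s) \<or> (\<forall>s\<in>V. s \<noteq> x1 \<and> s \<noteq> c \<longrightarrow> A c s)"
        using R1[OF u, of x1 c] x12 c cR nag by blast
      moreover have "\<not> A c x2"
      proof
        assume "A c x2"
        then have "A x2 c" using adjD by blast
        then have "A x1 c" using ag12 x2n c unfolding ag_def by (metis adjD(2))
        then show False using c by blast
      qed
      ultimately show ?thesis using x12 x2n by blast
    qed
    have Rsplit: "?R = B \<union> {c}" unfolding B_def using x1all c cR x12 by auto
    have cB: "c \<notin> B" unfolding B_def using c by auto
    have cnB: "\<not> A y c" if "y \<in> B" for y
    proof (cases "y = x1")
      case True then show ?thesis using c by simp
    next
      case False
      then have "ag x1 y" using agB that by blast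
      moreover have "y \<noteq> c" using that cB by auto
      ultimately show ?thesis using c unfolding ag_def by blast
    qed
    have Bcl: "A y y'" if "y \<in> B" "y' \<in> B" "y \<noteq> y'" for y y'
    proof (cases "y = x1")
      case True then show ?thesis using that unfolding B_def by auto
    next
      case False
      then have "ag x1 y" using agB that by blast
      show ?thesis
      proof (cases "y' = x1")
        case True then show ?thesis using that \<open>y \<noteq> x1\<close> unfolding B_def using adjD by auto
      next
        case False
        then have "A x1 y'" using that unfolding B_def by auto
        then show ?thesis using \<open>ag x1 y\<close> False that \<open>y \<noteq> x1\<close> adjD unfolding ag_def by metis
      qed
    qed
    have BR: "B \<subseteq> ?R" unfolding B_def by auto
    have "SJ G U B {c}" unfolding SJ_def
    proof (intro conjI allI)
      fix x y show "A x y \<longleftrightarrow> x \<in> V \<and> y \<in> V \<and> x \<noteq> y \<and> (x \<in> U \<or> y \<in> U \<or> (x \<in> B \<and> y \<in> B))"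
      proof
        assume a: "A x y"
        then have "x \<in> V" "y \<in> V" "x \<noteq> y" using adjD by auto
        moreover have "x \<in> U \<or> y \<in> U \<or> (x \<in> B \<and> y \<in> B)"
        proof (rule ccontr)
          assume "\<not> ?thesis"
          then have "x \<in> B \<union> {c}" "y \<in> B \<union> {c}" "\<not> (x \<in> B \<and> y \<in> B)" using Rsplit \<open>x \<in> V\<close> \<open>y \<in> V\<close> by auto
          then show False using a cnB adjD \<open>x \<noteq> y\<close> by blast
        qed
        ultimately show "x \<in> V \<and> y \<in> V \<and> x \<noteq> y \<and> (x \<in> U \<or> y \<in> U \<or> (x \<in> B \<and> y \<in> B))" by blast
      next
        assume "x \<in> V \<and> y \<in> V \<and> x \<noteq> y \<and> (x \<in> U \<or> y \<in> U \<or> (x \<in> B \<and> y \<in> B))"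
        then show "A x y" using U_adj Bcl by blast
      qed
    qed (use UV Rsplit BR cB in auto)
    moreover have "card B \<ge> 2"
    proof -
      have "{x1,x2} \<subseteq> B" using x12 unfolding B_def by auto
      then have "card {x1,x2} \<le> card B" using finV BR by (intro card_mono) (auto intro: finite_subset)
      then show ?thesis using x2n by simp
    qed
    ultimately show ?thesis by blast
  qed
qed

end


context dimG
begin

lemma nsym: "\<not> A a b \<Longrightarrow> \<not> A b a" using adjD(4) by blast
lemma asym: "A a b \<Longrightarrow> A b a" using adjD(4) by blast

lemma trans_nonadj:
  assumes U0: "U = {}" and V: "x \<in> V" "y \<in> V" "z \<in> V"
    and d: "x \<noteq> y" "y \<noteq> z" "x \<noteq> z" and n: "\<not> A x y" "\<not> A y z"
  shows "\<not> A x z"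
proof
  assume xz: "A x z"
  obtain w where w: "A x w" "A w y" using diam2[OF V(1,2) d(1) n(1)] by blast
  have wV: "w \<in> V" using adjD w by blast
  have zx: "A z x" using asym[OF xz] .
  have yx: "\<not> A y x" "\<not> A z y" using nsym n by blast+
  have wx': "A w x" "A y w" using asym w by blast+
  have wz: "A w z"
  proof (rule ccontr)
    assume "\<not> A w z"
    then have "\<not> A z w" by (rule nsym)
    then show False using noP4[of z x w y] zx w n yx by blast
  qed
  have zw: "A z w" using asym[OF wz] .
  obtain v where v: "v \<in> V" "v \<noteq> w" "\<not> A w v" using nonU[OF wV] U0 by blast
  have vw: "\<not> A v w" using nsym[OF v(3)] .
  have vx: "v \<noteq> x" "v \<noteq> y" "v \<noteq> z" using v wx'(1) w(2) wz by blast+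
  have wx: "w \<noteq> x" "w \<noteq> y" "w \<noteq> z" using w wz adjD(3) by blast+
  show False
  proof (cases "A v y")
    case False
    have yv: "\<not> A y v" using nsym[OF False] .
    have nvx: "\<not> A v x"
    proof
      assume "A v x" then have "A x v" by (rule asym)
      then show False using noP4[of y w x v] wx' w v yv yx by blast
    qed
    have nvz: "\<not> A v z"
    proof
      assume "A v z" then have "A z v" by (rule asym)
      then show False using noP4[of y w z v] wx' wz v yv n by blast
    qed
    show False
      by (rule bad[of x v w z y y]) (use V v wV vx wx d xz nvz n w False in simp_all)
  next
    case True
    have yv: "A y v" using asym[OF True] .
    have vx: "A v x"
    proof (rule ccontr)
      assume "\<not> A v x" then have "\<not> A x v" by (rule nsym)
      then show False using noP4[of x w y v] w yv n v by blast
    qed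
    have vz: "A v z"
    proof (rule ccontr)
      assume "\<not> A v z" then have "\<not> A z v" by (rule nsym)
      then show False using noP4[of z w y v] zw w yv yx v by blast
    qed
    show False
      by (rule bad[of x y v z w z]) (use V v wV \<open>v \<noteq> x\<close> \<open>v \<noteq> y\<close> \<open>v \<noteq> z\<close> wx d xz vz n w vw yx in simp_all)
  qed
qed

lemma classify_noU:
  assumes U0: "U = {}"
  shows "\<exists>P Q. S1 G P Q"
proof -
  obtain x0 where x0: "x0 \<in> V" using card_V by fastforce
  define P where "P = {y\<in>V. y = x0 \<or> \<not> A x0 y}"
  define Q where "Q = V - P"
  have x0P: "x0 \<in> P" using x0 unfolding P_def by auto
  have Qx0: "q \<in> Q \<Longrightarrow> A x0 q \<and> q \<noteq> x0 \<and> q \<in> V" for q unfolding Q_def P_def by auto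
  have PV: "P \<subseteq> V" unfolding P_def by auto
  have Pind: "\<not> A p p'" if "p \<in> P" "p' \<in> P" for p p'
  proof (cases "p = p'")
    case True then show ?thesis using adjD(3) by blast
  next
    case False
    show ?thesis
    proof (cases "p = x0 \<or> p' = x0")
      case True
      have "\<not> A x0 p" if "p \<noteq> x0" using that \<open>p \<in> P\<close> unfolding P_def by auto
      moreover have "\<not> A x0 p'" if "p' \<noteq> x0" using that \<open>p' \<in> P\<close> unfolding P_def by auto
      ultimately show ?thesis using True False nsym by metis
    next
      case F2: False
      then have "\<not> A x0 p" "\<not> A x0 p'" using that unfolding P_def by auto
      then have "\<not> A p x0" "\<not> A x0 p'" using nsym by blast+
      then show ?thesis using trans_nonadj[OF U0, of p x0 p'] that F2 False PV x0 by auto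
    qed
  qed
  have PQ: "A p q" if "p \<in> P" "q \<in> Q" for p q
  proof (cases "p = x0")
    case True then show ?thesis using Qx0 that by auto
  next
    case False
    then have np: "\<not> A x0 p" using that unfolding P_def by auto
    have "p \<noteq> q" using that unfolding Q_def by auto
    show ?thesis
    proof (rule ccontr)
      assume "\<not> A p q"
      then have "\<not> A x0 q" using trans_nonadj[OF U0, of x0 p q] np that False \<open>p \<noteq> q\<close> PV Qx0 x0 by auto
      then show False using Qx0 that by blast
    qed
  qed
  have Qind: "\<not> A q1 q2" if q: "q1 \<in> Q" "q2 \<in> Q" for q1 q2
  proof
    assume a12: "A q1 q2"
    obtain p' where p': "p' \<in> V" "p' \<noteq> x0" "\<not> A x0 p'" using nonU[OF x0] U0 by blast
    have p'P: "p' \<in> P" using p' unfolding P_def by auto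
    have q1V: "q1 \<in> V" using Qx0 q by blast
    obtain r where r: "r \<in> V" "r \<noteq> q1" "\<not> A q1 r" using nonU[OF q1V] U0 by blast
    have "r \<notin> P"
    proof
      assume "r \<in> P" then have "A r q1" using PQ q by blast
      then show False using asym r(3) by blast
    qed
    then have rQ: "r \<in> Q" using r unfolding Q_def by simp
    have rq2: "r \<noteq> q2" using a12 r by blast
    have q12: "q1 \<noteq> q2" using a12 adjD(3) by blast
    have q2r: "A q2 r"
    proof (rule ccontr)
      assume "\<not> A q2 r"
      then have "\<not> A r q2" by (rule nsym)
      have "\<not> A q1 q2"
        by (rule trans_nonadj[OF U0, of q1 r q2]) (use r rq2 q12 \<open>\<not> A r q2\<close> Qx0[OF q(2)] q1V in simp_all)
      then show False using a12 by simp
    qed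
    have dd: "p' \<noteq> q1" "p' \<noteq> q2" "r \<noteq> x0" using p'P q rQ x0P unfolding Q_def by auto
    show False
      by (rule bad[of x0 q1 q2 p' p' r])
        (use x0 Qx0[OF q(1)] Qx0[OF q(2)] p' asym[OF PQ[OF p'P q(1)]] asym[OF PQ[OF p'P q(2)]] dd r rq2 q2r q12 in auto)
  qed
  have "S1 G P Q" unfolding S1_def
  proof (intro conjI allI)
    fix x y show "A x y \<longleftrightarrow> (x \<in> P \<and> y \<in> Q) \<or> (x \<in> Q \<and> y \<in> P)"
    proof
      assume a: "A x y"
      then have "x \<in> V" "y \<in> V" using adjD by auto
      then show "(x \<in> P \<and> y \<in> Q) \<or> (x \<in> Q \<and> y \<in> P)" using a Pind Qind unfolding Q_def by blast
    next
      assume "(x \<in> P \<and> y \<in> Q) \<or> (x \<in> Q \<and> y \<in> P)"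
      then show "A x y" using PQ asym by blast
    qed
  qed (use PV in \<open>auto simp: Q_def\<close>)
  then show ?thesis by blast
qed

lemma classify:
  "(\<exists>P Q. S1 G P Q) \<or> (\<exists>X Z. SJ G X {} Z \<and> card Z \<ge> 2) \<or> (\<exists>X Y c. SJ G X Y {c} \<and> card Y \<ge> 2)"
  using classify_noU classify_U by blast

end


definition deg :: "'a graph \<Rightarrow> 'a \<Rightarrow> nat" where
  "deg G x = card {y\<in>verts G. adj G x y}"

definition twin :: "'a graph \<Rightarrow> 'a \<Rightarrow> 'a \<Rightarrow> bool" where
  "twin G u v \<longleftrightarrow> u \<in> verts G \<and> v \<in> verts G \<and> u \<noteq> v \<and>
     (\<forall>w\<in>verts G. w \<noteq> u \<and> w \<noteq> v \<longrightarrow> (adj G u w \<longleftrightarrow> adj G v w))"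

lemma aut_in: "automorphism G f \<Longrightarrow> x \<in> verts G \<Longrightarrow> f x \<in> verts G"
  unfolding automorphism_def bij_betw_def by auto

lemma aut_deg:
  assumes sg: "simple_graph G" and f: "automorphism G f" and x: "x \<in> verts G"
  shows "deg G (f x) = deg G x"
proof -
  have bij: "bij_betw f (verts G) (verts G)" and ad: "\<forall>x\<in>verts G. \<forall>y\<in>verts G. adj G x y \<longleftrightarrow> adj G (f x) (f y)"
    using f unfolding automorphism_def by auto
  have "{y\<in>verts G. adj G (f x) y} = f ` {y\<in>verts G. adj G x y}"
  proof
    show "{y\<in>verts G. adj G (f x) y} \<subseteq> f ` {y\<in>verts G. adj G x y}"
    proof
      fix y assume y: "y \<in> {y\<in>verts G. adj G (f x) y}"
      then obtain z where z: "z \<in> verts G" "y = f z" using bij unfolding bij_betw_def by auto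
      then have "adj G x z" using ad x y by auto
      then show "y \<in> f ` {y\<in>verts G. adj G x y}" using z by auto
    qed
  next
    show "f ` {y\<in>verts G. adj G x y} \<subseteq> {y\<in>verts G. adj G (f x) y}"
      using ad x bij unfolding bij_betw_def by auto
  qed
  moreover have "inj_on f {y\<in>verts G. adj G x y}"
    using bij unfolding bij_betw_def by (auto intro: inj_on_subset)
  ultimately show ?thesis unfolding deg_def by (simp add: card_image)
qed

lemma dist_by_deg:
  assumes sg: "simple_graph G"
    and h: "\<And>x y. x \<in> verts G \<Longrightarrow> y \<in> verts G \<Longrightarrow> c x = c y \<Longrightarrow> deg G x = deg G y \<Longrightarrow> x = y"
  shows "distinguishing G c"
  unfolding distinguishing_def
proof (intro allI impI ballI)
  fix f x assume f: "automorphism G f \<and> (\<forall>x\<in>verts G. c (f x) = c x)" and x: "x \<in> verts G"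
  show "f x = x"
    using h[OF aut_in[OF _ x] x] f aut_deg[OF sg _ x] x by auto
qed

lemma dist_by_anchor:
  assumes a0: "a0 \<in> verts G" "\<And>y. y \<in> verts G \<Longrightarrow> c y = c a0 \<Longrightarrow> y = a0"
    and h: "\<And>x y. x \<in> verts G \<Longrightarrow> y \<in> verts G \<Longrightarrow> c x = c y \<Longrightarrow> (adj G a0 x \<longleftrightarrow> adj G a0 y) \<Longrightarrow> x = y"
  shows "distinguishing G c"
  unfolding distinguishing_def
proof (intro allI impI ballI)
  fix f x assume f: "automorphism G f \<and> (\<forall>x\<in>verts G. c (f x) = c x)" and x: "x \<in> verts G"
  have fa: "f a0 = a0" using a0 f aut_in[of G f a0] by auto
  have "adj G a0 x \<longleftrightarrow> adj G (f a0) (f x)" using f a0 x unfolding automorphism_def by auto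
  then have "adj G a0 (f x) \<longleftrightarrow> adj G a0 x" using fa by simp
  then show "f x = x" using h[OF aut_in[OF _ x] x] f x by auto
qed

lemma twin_swap:
  assumes sg: "simple_graph G" and tw: "twin G u v" and d: "distinguishing G c"
  shows "c u \<noteq> c v"
proof
  assume cuv: "c u = c v"
  define f where "f = (\<lambda>x. if x = u then v else if x = v then u else x)"
  have uv: "u \<in> verts G" "v \<in> verts G" "u \<noteq> v" using tw unfolding twin_def by auto
  have tw': "\<And>w. w \<in> verts G \<Longrightarrow> w \<noteq> u \<Longrightarrow> w \<noteq> v \<Longrightarrow> adj G u w = adj G v w"
    using tw unfolding twin_def by auto
  have sym: "\<And>a b. adj G a b = adj G b a" using sg_adjD[OF sg] by blast
  have "inj_on f (verts G)" unfolding inj_on_def f_def by auto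
  moreover have "f ` verts G = verts G"
  proof
    show "f ` verts G \<subseteq> verts G" using uv unfolding f_def by auto
    show "verts G \<subseteq> f ` verts G"
    proof
      fix x assume "x \<in> verts G"
      then have "f (f x) = x" "f x \<in> verts G" using uv unfolding f_def by auto
      then show "x \<in> f ` verts G" by (metis image_eqI)
    qed
  qed
  ultimately have bij: "bij_betw f (verts G) (verts G)" unfolding bij_betw_def by simp
  have adjp: "adj G x y \<longleftrightarrow> adj G (f x) (f y)" if xy: "x \<in> verts G" "y \<in> verts G" for x y
  proof -
    have uu: "\<not> adj G u u" "\<not> adj G v v" using sg_adjD[OF sg] by blast+
    consider "x = u" | "x = v" | "x \<noteq> u \<and> x \<noteq> v" by blast
    then show ?thesis
    proof cases
      case 1
      then show ?thesis
        using tw'[of y] xy uu sym[of u v] unfolding f_def by (cases "y = u"; cases "y = v") auto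
    next
      case 2
      then show ?thesis
        using tw'[of y] xy uu sym[of u v] uv unfolding f_def by (cases "y = u"; cases "y = v") auto
    next
      case 3
      then show ?thesis
        using tw'[of x] xy uu sym[of x u] sym[of x v] unfolding f_def by (cases "y = u"; cases "y = v") auto
    qed
  qed
  have aut: "automorphism G f" unfolding automorphism_def using bij adjp by auto
  have "\<forall>x\<in>verts G. c (f x) = c x" unfolding f_def using cuv by auto
  then have "f u = u" using d aut uv unfolding distinguishing_def by blast
  then show False using uv unfolding f_def by auto
qed

lemma twins_card:
  assumes sg: "simple_graph G" and X: "X \<subseteq> verts G"
    and tw: "\<And>u v. u \<in> X \<Longrightarrow> v \<in> X \<Longrightarrow> u \<noteq> v \<Longrightarrow> twin G u v"
    and d: "distinguishing G c" and c: "c ` verts G \<subseteq> {..<k}"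
  shows "card X \<le> k"
proof -
  have "inj_on c X" unfolding inj_on_def using twin_swap[OF sg tw d] by blast
  then have "card X \<le> card {..<k}" using c X by (intro card_inj_on_le) auto
  then show ?thesis by simp
qed

lemma D_eq:
  assumes "c0 ` verts G \<subseteq> {..<m}" "distinguishing G c0"
    and "\<And>k c. c ` verts G \<subseteq> {..<k} \<Longrightarrow> distinguishing G c \<Longrightarrow> m \<le> k"
  shows "distinguishing_number G = m"
  unfolding distinguishing_number_def
  by (rule Least_equality) (use assms in auto)

lemma inj_color: "finite A \<Longrightarrow> \<exists>g. inj_on g A \<and> g ` A \<subseteq> {..<card A}"
  using ex_bij_betw_finite_nat[of A] unfolding bij_betw_def by (auto simp: atLeast0LessThan)

lemma bij_color: "finite A \<Longrightarrow> \<exists>g. bij_betw g A {..<card A}"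
  using ex_bij_betw_finite_nat[of A] by (auto simp: atLeast0LessThan)


lemma S1_facts:
  assumes sg: "simple_graph G" and S: "S1 G P Q"
  shows "verts G = P \<union> Q" "P \<inter> Q = {}" "finite P" "finite Q"
    "\<And>x y. adj G x y \<longleftrightarrow> (x \<in> P \<and> y \<in> Q) \<or> (x \<in> Q \<and> y \<in> P)"
  using S sg_fin[OF sg] unfolding S1_def by auto

lemma S1_twins:
  assumes sg: "simple_graph G" and S: "S1 G P Q"
  shows "\<And>u v. u \<in> P \<Longrightarrow> v \<in> P \<Longrightarrow> u \<noteq> v \<Longrightarrow> twin G u v"
    "\<And>u v. u \<in> Q \<Longrightarrow> v \<in> Q \<Longrightarrow> u \<noteq> v \<Longrightarrow> twin G u v"
  using S1_facts[OF sg S] unfolding twin_def by auto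

lemma S1_nbrs:
  assumes sg: "simple_graph G" and S: "S1 G P Q"
  shows "x \<in> P \<Longrightarrow> {y\<in>verts G. adj G x y} = Q" "x \<in> Q \<Longrightarrow> {y\<in>verts G. adj G x y} = P"
  using S1_facts[OF sg S] by auto

lemma D_S1_neq:
  assumes sg: "simple_graph G" and S: "S1 G P Q" and ne: "card P \<noteq> card Q"
  shows "distinguishing_number G = max (card P) (card Q)"
proof -
  note F = S1_facts[OF sg S]
  obtain gP where gP: "inj_on gP P" "gP ` P \<subseteq> {..<card P}" using inj_color F(3) by blast
  obtain gQ where gQ: "inj_on gQ Q" "gQ ` Q \<subseteq> {..<card Q}" using inj_color F(4) by blast
  define c where "c = (\<lambda>x. if x \<in> P then gP x else gQ x)"
  have degP: "deg G x = card Q" if "x \<in> P" for x using S1_nbrs[OF sg S] that unfolding deg_def by simp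
  have degQ: "deg G x = card P" if "x \<in> Q" for x using S1_nbrs[OF sg S] that F(2) unfolding deg_def by auto
  show ?thesis
  proof (rule D_eq)
    show "c ` verts G \<subseteq> {..<max (card P) (card Q)}"
    proof
      fix z assume "z \<in> c ` verts G"
      then obtain x where x: "x \<in> verts G" "z = c x" by blast
      show "z \<in> {..<max (card P) (card Q)}"
      proof (cases "x \<in> P")
        case True then have "gP x < card P" using gP by blast
        then show ?thesis using x True unfolding c_def by simp
      next
        case False then have "x \<in> Q" using x F(1) by blast
        then have "gQ x < card Q" using gQ by blast
        then show ?thesis using x False unfolding c_def by simp
      qed
    qed
    show "distinguishing G c"
    proof (rule dist_by_deg[OF sg])
      fix x y assume xy: "x \<in> verts G" "y \<in> verts G" "c x = c y" "deg G x = deg G y"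
      have xPQ: "x \<in> P \<or> x \<in> Q" "y \<in> P \<or> y \<in> Q" using xy(1,2) F(1) by blast+
      have "\<not> (x \<in> P \<and> y \<in> Q)"
      proof
        assume "x \<in> P \<and> y \<in> Q" then have "deg G x = card Q" "deg G y = card P" using degP degQ by blast+
        then show False using xy(4) ne by simp
      qed
      moreover have "\<not> (x \<in> Q \<and> y \<in> P)"
      proof
        assume "x \<in> Q \<and> y \<in> P" then have "deg G x = card P" "deg G y = card Q" using degP degQ by blast+
        then show False using xy(4) ne by simp
      qed
      ultimately have "(x \<in> P \<and> y \<in> P) \<or> (x \<in> Q \<and> y \<in> Q)" using xPQ by blast
      then show "x = y"
      proof
        assume h: "x \<in> P \<and> y \<in> P"
        then have "gP x = gP y" using xy(3) unfolding c_def by simp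
        then show ?thesis using gP(1) h unfolding inj_on_def by blast
      next
        assume h: "x \<in> Q \<and> y \<in> Q"
        then have "x \<notin> P" "y \<notin> P" using F(2) by blast+
        then have "gQ x = gQ y" using xy(3) unfolding c_def by simp
        then show ?thesis using gQ(1) h unfolding inj_on_def by blast
      qed
    qed
  next
    fix k c assume c: "c ` verts G \<subseteq> {..<k}" "distinguishing G c"
    have "card P \<le> k" by (rule twins_card[OF sg _ S1_twins(1)[OF sg S] c(2) c(1)]) (use F(1) in auto)
    moreover have "card Q \<le> k" by (rule twins_card[OF sg _ S1_twins(2)[OF sg S] c(2) c(1)]) (use F(1) in auto)
    ultimately show "max (card P) (card Q) \<le> k" by simp
  qed
qed

lemma D_S1_eq:
  assumes sg: "simple_graph G" and S: "S1 G P Q" and eq: "card P = card Q" and pos: "card P \<ge> 1"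
  shows "distinguishing_number G = card P + 1"
proof -
  note F = S1_facts[OF sg S]
  let ?m = "card P"
  obtain gP where gP: "bij_betw gP P {..<?m}" using bij_color F(3) by blast
  obtain gQ where gQ: "bij_betw gQ Q {..<?m}" using bij_color F(4) eq by fastforce
  define c where "c = (\<lambda>x. if x \<in> P then gP x else Suc (gQ x))"
  have iP: "inj_on gP P" and iQ: "inj_on gQ Q" using gP gQ unfolding bij_betw_def by auto
  have "0 \<in> gP ` P" using gP pos unfolding bij_betw_def by auto
  then obtain a0 where a0: "a0 \<in> P" "gP a0 = 0" by auto
  show ?thesis
  proof (rule D_eq)
    show "c ` verts G \<subseteq> {..<?m + 1}"
    proof
      fix z assume "z \<in> c ` verts G"
      then obtain x where x: "x \<in> verts G" "z = c x" by blast
      show "z \<in> {..<?m + 1}"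
      proof (cases "x \<in> P")
        case True then have "gP x < ?m" using gP unfolding bij_betw_def by blast
        then show ?thesis using x True unfolding c_def by simp
      next
        case False then have "x \<in> Q" using x F(1) by blast
        then have "gQ x < ?m" using gQ unfolding bij_betw_def by blast
        then show ?thesis using x False unfolding c_def by simp
      qed
    qed
    show "distinguishing G c"
    proof (rule dist_by_anchor)
      show "a0 \<in> verts G" using a0 F(1) by auto
    next
      fix y assume y: "y \<in> verts G" "c y = c a0"
      have "y \<in> P"
      proof (rule ccontr)
        assume "y \<notin> P" then have "c y = Suc (gQ y)" unfolding c_def by simp
        moreover have "c a0 = 0" using a0 unfolding c_def by simp
        ultimately show False using y by simp
      qed
      then have "gP y = gP a0" using y a0 unfolding c_def by simp
      then show "y = a0" using iP \<open>y \<in> P\<close> a0 unfolding inj_on_def by blast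
    next
      fix x y assume xy: "x \<in> verts G" "y \<in> verts G" "c x = c y" "adj G a0 x \<longleftrightarrow> adj G a0 y"
      have aQ: "adj G a0 z \<longleftrightarrow> z \<in> Q" for z using a0(1) F(2) F(5)[of a0 z] by blast
      have "(x \<in> P \<and> y \<in> P) \<or> (x \<in> Q \<and> y \<in> Q)" using xy(1,2,4) aQ F(1,2) by blast
      then show "x = y"
      proof
        assume "x \<in> P \<and> y \<in> P"
        then have "gP x = gP y" using xy(3) unfolding c_def by simp
        then show ?thesis using iP \<open>x \<in> P \<and> y \<in> P\<close> unfolding inj_on_def by blast
      next
        assume h: "x \<in> Q \<and> y \<in> Q"
        then have "x \<notin> P" "y \<notin> P" using F(2) by blast+
        then have "gQ x = gQ y" using xy(3) unfolding c_def by simp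
        then show ?thesis using iQ h unfolding inj_on_def by blast
      qed
    qed
  next
    fix k c assume c: "c ` verts G \<subseteq> {..<k}" "distinguishing G c"
    have kP: "?m \<le> k" by (rule twins_card[OF sg _ S1_twins(1)[OF sg S] c(2) c(1)]) (use F(1) in auto)
    show "?m + 1 \<le> k"
    proof (rule ccontr)
      assume "\<not> ?m + 1 \<le> k"
      then have k: "k = ?m" using kP by simp
      have injP: "inj_on c P" using twin_swap[OF sg S1_twins(1)[OF sg S] c(2)] unfolding inj_on_def by blast
      have injQ: "inj_on c Q" using twin_swap[OF sg S1_twins(2)[OF sg S] c(2)] unfolding inj_on_def by blast
      have cP: "c ` P = {..<?m}"
        by (rule card_subset_eq) (use c(1) F(1) k injP card_image in auto)
      have cQ: "c ` Q = {..<?m}"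
        by (rule card_subset_eq) (use c(1) F(1) k injQ card_image eq in auto)
      define f where "f = (\<lambda>x. if x \<in> P then inv_into Q c (c x) else if x \<in> Q then inv_into P c (c x) else x)"
      have fP: "f x \<in> Q \<and> c (f x) = c x" if "x \<in> P" for x
      proof -
        have "c x \<in> c ` Q" using cP cQ that by auto
        then show ?thesis using that unfolding f_def by (auto intro: inv_into_into f_inv_into_f)
      qed
      have fQ: "f x \<in> P \<and> c (f x) = c x" if "x \<in> Q" for x
      proof -
        have "c x \<in> c ` P" using cP cQ that by auto
        then show ?thesis using that F(2) unfolding f_def by (auto intro: inv_into_into f_inv_into_f)
      qed
      have finV: "finite (verts G)" using sg_fin[OF sg] .
      have injf: "inj_on f (verts G)"
      proof (rule inj_onI)
        fix x y assume xy: "x \<in> verts G" "y \<in> verts G" "f x = f y"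
        show "x = y"
        proof (cases "x \<in> P")
          case True
          show ?thesis
          proof (cases "y \<in> P")
            case True
            then have "c x = c y" using fP[of x] fP[of y] \<open>x \<in> P\<close> xy(3) by metis
            then show ?thesis using inj_onD[OF injP] \<open>x \<in> P\<close> \<open>y \<in> P\<close> by blast
          next
            case False
            then have "y \<in> Q" using xy F(1) by auto
            have "f x \<in> Q" "f y \<in> P" using fP[of x] fQ[of y] \<open>x \<in> P\<close> \<open>y \<in> Q\<close> by blast+
            then show ?thesis using xy(3) F(2) by auto
          qed
        next
          case False
          then have xQ: "x \<in> Q" using xy F(1) by auto
          show ?thesis
          proof (cases "y \<in> P")
            case True
            have "f x \<in> P" "f y \<in> Q" using fQ[of x] fP[of y] xQ True by blast+
            then show ?thesis using xy(3) F(2) by auto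
          next
            case False
            then have "y \<in> Q" using xy F(1) by auto
            then have "c x = c y" using fQ[of x] fQ[of y] xQ xy(3) by metis
            then show ?thesis using inj_onD[OF injQ] xQ \<open>y \<in> Q\<close> by blast
          qed
        qed
      qed
      have fV: "f ` verts G \<subseteq> verts G" using fP fQ F(1) by blast
      have "f ` verts G = verts G" using endo_inj_surj[OF finV fV injf] .
      then have bij: "bij_betw f (verts G) (verts G)" using injf unfolding bij_betw_def by simp
      have side: "(f x \<in> P \<longleftrightarrow> x \<in> Q) \<and> (f x \<in> Q \<longleftrightarrow> x \<in> P)" if "x \<in> verts G" for x
        using fP fQ that F(1,2) by blast
      have "adj G x y \<longleftrightarrow> adj G (f x) (f y)" if "x \<in> verts G" "y \<in> verts G" for x y
      proof -
        have "adj G (f x) (f y) \<longleftrightarrow> (f x \<in> P \<and> f y \<in> Q) \<or> (f x \<in> Q \<and> f y \<in> P)" by (rule F(5))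
        also have "\<dots> \<longleftrightarrow> (x \<in> Q \<and> y \<in> P) \<or> (x \<in> P \<and> y \<in> Q)" using side[OF that(1)] side[OF that(2)] by simp
        also have "\<dots> \<longleftrightarrow> adj G x y" using F(5)[of x y] by blast
        finally show ?thesis by simp
      qed
      then have aut: "automorphism G f" unfolding automorphism_def using bij by blast
      have col: "\<forall>x\<in>verts G. c (f x) = c x" using fP fQ F(1) by blast
      have "f a0 = a0" using c(2) aut col a0 F(1) unfolding distinguishing_def by blast
      then show False using fP[OF a0(1)] a0(1) F(2) by auto
    qed
  qed
qed


lemma SJ_facts:
  assumes sg: "simple_graph G" and S: "SJ G X Y Z"
  shows "verts G = X \<union> Y \<union> Z" "X \<inter> Y = {}" "X \<inter> Z = {}" "Y \<inter> Z = {}"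
    "finite X" "finite Y" "finite Z"
    "\<And>x y. adj G x y \<longleftrightarrow> x \<in> verts G \<and> y \<in> verts G \<and> x \<noteq> y \<and> (x \<in> X \<or> y \<in> X \<or> (x \<in> Y \<and> y \<in> Y))"
  using S sg_fin[OF sg] unfolding SJ_def by auto

lemma SJ_twins:
  assumes sg: "simple_graph G" and S: "SJ G X Y Z"
  shows "\<And>u v. u \<in> X \<Longrightarrow> v \<in> X \<Longrightarrow> u \<noteq> v \<Longrightarrow> twin G u v"
    "\<And>u v. u \<in> Y \<Longrightarrow> v \<in> Y \<Longrightarrow> u \<noteq> v \<Longrightarrow> twin G u v"
    "\<And>u v. u \<in> Z \<Longrightarrow> v \<in> Z \<Longrightarrow> u \<noteq> v \<Longrightarrow> twin G u v"
proof -
  note F = SJ_facts[OF sg S]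
  fix u v
  show "u \<in> X \<Longrightarrow> v \<in> X \<Longrightarrow> u \<noteq> v \<Longrightarrow> twin G u v"
    unfolding twin_def F(8) using F(1) by auto
  show "u \<in> Y \<Longrightarrow> v \<in> Y \<Longrightarrow> u \<noteq> v \<Longrightarrow> twin G u v"
    unfolding twin_def F(8) using F(1,2,4) by auto
  show "u \<in> Z \<Longrightarrow> v \<in> Z \<Longrightarrow> u \<noteq> v \<Longrightarrow> twin G u v"
    unfolding twin_def F(8) using F(1,3,4) by auto
qed

lemma SJ_deg:
  assumes sg: "simple_graph G" and S: "SJ G X Y Z"
  shows "x \<in> X \<Longrightarrow> deg G x = card X + card Y + card Z - 1"
    "x \<in> Y \<Longrightarrow> deg G x = card X + card Y - 1"
    "x \<in> Z \<Longrightarrow> deg G x = card X"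
proof -
  note F = SJ_facts[OF sg S]
  have cV: "card (verts G) = card X + card Y + card Z"
    using F(1-7) by (simp add: card_Un_disjoint Int_Un_distrib2)
  have cXY: "card (X \<union> Y) = card X + card Y" using F(2,5,6) by (simp add: card_Un_disjoint)
  assume "x \<in> X"
  then have "{y\<in>verts G. adj G x y} = verts G - {x}" unfolding F(8) using F(1) by auto
  then show "deg G x = card X + card Y + card Z - 1" unfolding deg_def
    using cV \<open>x \<in> X\<close> F(1) sg_fin[OF sg] by simp
next
  note F = SJ_facts[OF sg S]
  have cXY: "card (X \<union> Y) = card X + card Y" using F(2,5,6) by (simp add: card_Un_disjoint)
  assume xY: "x \<in> Y"
  then have "{y\<in>verts G. adj G x y} = (X \<union> Y) - {x}" unfolding F(8) using F(1,2,4) by auto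
  then show "deg G x = card X + card Y - 1" unfolding deg_def
    using cXY xY F(5,6) by simp
next
  note F = SJ_facts[OF sg S]
  assume xZ: "x \<in> Z"
  then have "{y\<in>verts G. adj G x y} = X" unfolding F(8) using F(1,3,4) by auto
  then show "deg G x = card X" unfolding deg_def by simp
qed

lemma D_SJ:
  assumes sg: "simple_graph G" and S: "SJ G X Y Z"
    and cond: "(Y = {} \<and> card Z \<ge> 2) \<or> (card Y \<ge> 2 \<and> card Z = 1)"
  shows "distinguishing_number G = max (card X) (max (card Y) (card Z))"
proof -
  note F = SJ_facts[OF sg S]
  note dg = SJ_deg[OF sg S]
  let ?M = "max (card X) (max (card Y) (card Z))"
  obtain gX where gX: "inj_on gX X" "gX ` X \<subseteq> {..<card X}" using inj_color F(5) by blast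
  obtain gY where gY: "inj_on gY Y" "gY ` Y \<subseteq> {..<card Y}" using inj_color F(6) by blast
  obtain gZ where gZ: "inj_on gZ Z" "gZ ` Z \<subseteq> {..<card Z}" using inj_color F(7) by blast
  define c where "c = (\<lambda>x. if x \<in> X then gX x else if x \<in> Y then gY x else gZ x)"
  have cz: "card Z \<ge> 1" using cond by auto
  have same: "(x \<in> X \<and> y \<in> X) \<or> (x \<in> Y \<and> y \<in> Y) \<or> (x \<in> Z \<and> y \<in> Z)"
    if xy: "x \<in> verts G" "y \<in> verts G" "deg G x = deg G y" for x y
  proof -
    have xc: "x \<in> X \<or> x \<in> Y \<or> x \<in> Z" "y \<in> X \<or> y \<in> Y \<or> y \<in> Z" using xy F(1) by blast+
    have yb: "card Y \<ge> 2" if "x \<in> Y \<or> y \<in> Y" using cond that by auto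
    have d1: "card X + card Y + card Z - 1 \<noteq> card X + card Y - 1" if "x \<in> Y \<or> y \<in> Y" using cz yb[OF that] by simp
    have d2: "card X + card Y + card Z - 1 \<noteq> card X" using cond by auto
    have d3: "card X + card Y - 1 \<noteq> card X" if "x \<in> Y \<or> y \<in> Y" using yb[OF that] by simp
    show ?thesis
      using xc xy(3) dg[of x] dg[of y] d1 d2 d3 yb F(2,3,4) by (elim disjE; simp; blast?)
  qed
  show ?thesis
  proof (rule D_eq)
    show "c ` verts G \<subseteq> {..<?M}"
    proof
      fix z assume "z \<in> c ` verts G"
      then obtain x where x: "x \<in> verts G" "z = c x" by blast
      show "z \<in> {..<?M}"
      proof (cases "x \<in> X")
        case True then have "gX x < card X" using gX by blast
        then show ?thesis using x True unfolding c_def by simp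
      next
        case F1: False
        show ?thesis
        proof (cases "x \<in> Y")
          case True then have "gY x < card Y" using gY by blast
          then show ?thesis using x True F1 unfolding c_def by simp
        next
          case False then have "x \<in> Z" using x F1 F(1) by blast
          then have "gZ x < card Z" using gZ by blast
          then show ?thesis using x False F1 unfolding c_def by simp
        qed
      qed
    qed
    show "distinguishing G c"
    proof (rule dist_by_deg[OF sg])
      fix x y assume xy: "x \<in> verts G" "y \<in> verts G" "c x = c y" "deg G x = deg G y"
      from same[OF xy(1,2,4)] show "x = y"
      proof (elim disjE)
        assume h: "x \<in> X \<and> y \<in> X"
        then have "gX x = gX y" using xy(3) unfolding c_def by simp
        then show ?thesis using gX(1) h unfolding inj_on_def by blast
      next
        assume h: "x \<in> Y \<and> y \<in> Y"
        then have "x \<notin> X" "y \<notin> X" using F(2) by blast+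
        then have "gY x = gY y" using xy(3) h unfolding c_def by simp
        then show ?thesis using gY(1) h unfolding inj_on_def by blast
      next
        assume h: "x \<in> Z \<and> y \<in> Z"
        then have "x \<notin> X" "y \<notin> X" "x \<notin> Y" "y \<notin> Y" using F(3,4) by blast+
        then have "gZ x = gZ y" using xy(3) h unfolding c_def by simp
        then show ?thesis using gZ(1) h unfolding inj_on_def by blast
      qed
    qed
  next
    fix k c assume c: "c ` verts G \<subseteq> {..<k}" "distinguishing G c"
    have "card X \<le> k" by (rule twins_card[OF sg _ SJ_twins(1)[OF sg S] c(2) c(1)]) (use F(1) in auto)
    moreover have "card Y \<le> k" by (rule twins_card[OF sg _ SJ_twins(2)[OF sg S] c(2) c(1)]) (use F(1) in auto)
    moreover have "card Z \<le> k" by (rule twins_card[OF sg _ SJ_twins(3)[OF sg S] c(2) c(1)]) (use F(1) in auto)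
    ultimately show "?M \<le> k" by simp
  qed
qed


lemma S1_cb: "S1 (complete_bipartite s t) (Inl ` {..<s}) (Inr ` {..<t})"
  unfolding S1_def complete_bipartite_def verts_def adj_def by auto

lemma SJ_ce: "SJ (gjoin (complete s) (edgeless t)) (Inl ` {..<s}) {} (Inr ` {..<t})"
  unfolding SJ_def gjoin_def complete_def edgeless_def verts_def adj_def
  by (auto split: sum.splits)

lemma SJ_ccu: "SJ (gjoin (complete s) (gunion (complete t) (complete 1)))
   (Inl ` {..<s}) (Inr ` Inl ` {..<t}) {Inr (Inr 0)}"
  unfolding SJ_def gjoin_def gunion_def complete_def verts_def adj_def
  by (auto split: sum.splits)

lemma card_Inl: "card (Inl ` {..<s::nat} :: (nat + 'b::type) set) = s"
  by (simp add: card_image)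
lemma card_Inr: "card (Inr ` {..<s::nat} :: ('a::type + nat) set) = s"
  by (simp add: card_image)
lemma card_InrInl: "card (Inr ` Inl ` {..<s::nat} :: ('a::type + (nat + 'b::type)) set) = s"
  by (simp add: card_image inj_on_def)

lemma iso_get:
  assumes "isomorphic G H"
  obtains f where "bij_betw f (verts G) (verts H)"
    "\<And>x y. x \<in> verts G \<Longrightarrow> y \<in> verts G \<Longrightarrow> adj G x y \<longleftrightarrow> adj H (f x) (f y)"
  using assms unfolding isomorphic_def by blast

lemma card_pre:
  assumes f: "bij_betw f V1 W1" and P: "P' \<subseteq> W1"
  shows "card {x\<in>V1. f x \<in> P'} = card P'"
proof -
  have "f ` {x\<in>V1. f x \<in> P'} = P'" using f P unfolding bij_betw_def by auto
  moreover have "inj_on f {x\<in>V1. f x \<in> P'}" using f unfolding bij_betw_def by (auto intro: inj_on_subset)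
  ultimately show ?thesis by (metis card_image)
qed

lemma iso_S1:
  assumes sg: "simple_graph G" and iso: "isomorphic G H" and S: "S1 H P' Q'"
  shows "\<exists>P Q. S1 G P Q \<and> card P = card P' \<and> card Q = card Q'"
proof -
  obtain f where f: "bij_betw f (verts G) (verts H)"
    and fa: "\<And>x y. x \<in> verts G \<Longrightarrow> y \<in> verts G \<Longrightarrow> adj G x y \<longleftrightarrow> adj H (f x) (f y)"
    using iso_get[OF iso] by blast
  have H: "verts H = P' \<union> Q'" "P' \<inter> Q' = {}"
    "\<And>x y. adj H x y \<longleftrightarrow> (x \<in> P' \<and> y \<in> Q') \<or> (x \<in> Q' \<and> y \<in> P')"
    using S unfolding S1_def by auto
  define P where "P = {x\<in>verts G. f x \<in> P'}"
  define Q where "Q = {x\<in>verts G. f x \<in> Q'}"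
  have fV: "x \<in> verts G \<Longrightarrow> f x \<in> verts H" for x using f unfolding bij_betw_def by auto
  have "S1 G P Q" unfolding S1_def
  proof (intro conjI allI)
    show "verts G = P \<union> Q" using fV H(1) unfolding P_def Q_def by auto
    show "P \<inter> Q = {}" using H(2) unfolding P_def Q_def by auto
    fix x y
    show "adj G x y \<longleftrightarrow> (x \<in> P \<and> y \<in> Q) \<or> (x \<in> Q \<and> y \<in> P)"
    proof (cases "x \<in> verts G \<and> y \<in> verts G")
      case True
      then show ?thesis using fa[of x y] H(3)[of "f x" "f y"] unfolding P_def Q_def by auto
    next
      case False
      then have "\<not> adj G x y" using sg_adjD[OF sg] by blast
      then show ?thesis using False unfolding P_def Q_def by auto
    qed
  qed
  moreover have "card P = card P'" unfolding P_def by (rule card_pre[OF f]) (use H in auto)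
  moreover have "card Q = card Q'" unfolding Q_def by (rule card_pre[OF f]) (use H in auto)
  ultimately show ?thesis by blast
qed

lemma iso_SJ:
  assumes sg: "simple_graph G" and iso: "isomorphic G H" and S: "SJ H X' Y' Z'"
  shows "\<exists>X Y Z. SJ G X Y Z \<and> card X = card X' \<and> card Y = card Y' \<and> card Z = card Z'
     \<and> (Y' = {} \<longrightarrow> Y = {})"
proof -
  obtain f where f: "bij_betw f (verts G) (verts H)"
    and fa: "\<And>x y. x \<in> verts G \<Longrightarrow> y \<in> verts G \<Longrightarrow> adj G x y \<longleftrightarrow> adj H (f x) (f y)"
    using iso_get[OF iso] by blast
  have H: "verts H = X' \<union> Y' \<union> Z'" "X' \<inter> Y' = {}" "X' \<inter> Z' = {}" "Y' \<inter> Z' = {}"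
    "\<And>x y. adj H x y \<longleftrightarrow> x \<in> verts H \<and> y \<in> verts H \<and> x \<noteq> y \<and> (x \<in> X' \<or> y \<in> X' \<or> (x \<in> Y' \<and> y \<in> Y'))"
    using S unfolding SJ_def by auto
  define X where "X = {x\<in>verts G. f x \<in> X'}"
  define Y where "Y = {x\<in>verts G. f x \<in> Y'}"
  define Z where "Z = {x\<in>verts G. f x \<in> Z'}"
  have fV: "x \<in> verts G \<Longrightarrow> f x \<in> verts H" for x using f unfolding bij_betw_def by auto
  have finj: "x \<in> verts G \<Longrightarrow> y \<in> verts G \<Longrightarrow> f x = f y \<longleftrightarrow> x = y" for x y
    using f unfolding bij_betw_def inj_on_def by auto
  have "SJ G X Y Z" unfolding SJ_def
  proof (intro conjI allI)
    show "verts G = X \<union> Y \<union> Z" using fV H(1) unfolding X_def Y_def Z_def by auto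
    show "X \<inter> Y = {}" using H(2) unfolding X_def Y_def by auto
    show "X \<inter> Z = {}" using H(3) unfolding X_def Z_def by auto
    show "Y \<inter> Z = {}" using H(4) unfolding Y_def Z_def by auto
    fix x y
    show "adj G x y \<longleftrightarrow> x \<in> verts G \<and> y \<in> verts G \<and> x \<noteq> y \<and> (x \<in> X \<or> y \<in> X \<or> (x \<in> Y \<and> y \<in> Y))"
    proof (cases "x \<in> verts G \<and> y \<in> verts G")
      case True
      then show ?thesis using fa[of x y] H(5)[of "f x" "f y"] fV finj[of x y] unfolding X_def Y_def by auto
    next
      case False
      then have "\<not> adj G x y" using sg_adjD[OF sg] by blast
      then show ?thesis using False by auto
    qed
  qed
  moreover have "card X = card X'" unfolding X_def by (rule card_pre[OF f]) (use H in auto)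
  moreover have "card Y = card Y'" unfolding Y_def by (rule card_pre[OF f]) (use H in auto)
  moreover have "card Z = card Z'" unfolding Z_def by (rule card_pre[OF f]) (use H in auto)
  moreover have "Y' = {} \<longrightarrow> Y = {}" unfolding Y_def by auto
  ultimately show ?thesis by blast
qed

lemma iso_intro:
  assumes "bij_betw f (verts G) (verts H)"
    "\<And>x y. x \<in> verts G \<Longrightarrow> y \<in> verts G \<Longrightarrow> adj G x y \<longleftrightarrow> adj H (f x) (f y)"
  shows "isomorphic G H"
  using assms unfolding isomorphic_def by blast

lemma bij_eqon: "bij_betw g A B \<Longrightarrow> (\<And>x. x \<in> A \<Longrightarrow> f x = g x) \<Longrightarrow> bij_betw f A B"
  using bij_betw_cong by metis

lemma bij_part:
  assumes "finite A" "finite B" "card A = card B"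
  obtains g where "bij_betw g A B"
  using finite_same_card_bij[OF assms] by blast

lemma S1_iso:
  assumes S: "S1 G P Q" and T: "S1 H P' Q'"
    and fin: "finite P" "finite Q" "finite P'" "finite Q'"
    and c: "card P = card P'" "card Q = card Q'"
  shows "isomorphic G H"
proof -
  obtain gP where gP: "bij_betw gP P P'" using bij_part[OF fin(1,3) c(1)] by blast
  obtain gQ where gQ: "bij_betw gQ Q Q'" using bij_part[OF fin(2,4) c(2)] by blast
  have G: "verts G = P \<union> Q" "P \<inter> Q = {}"
    "\<And>x y. adj G x y \<longleftrightarrow> (x \<in> P \<and> y \<in> Q) \<or> (x \<in> Q \<and> y \<in> P)"
    using S unfolding S1_def by auto
  have H: "verts H = P' \<union> Q'" "P' \<inter> Q' = {}"
    "\<And>x y. adj H x y \<longleftrightarrow> (x \<in> P' \<and> y \<in> Q') \<or> (x \<in> Q' \<and> y \<in> P')"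
    using T unfolding S1_def by auto
  define f where "f = (\<lambda>x. if x \<in> P then gP x else gQ x)"
  have b1: "bij_betw f P P'" by (rule bij_eqon[OF gP]) (simp add: f_def)
  have b2: "bij_betw f Q Q'" by (rule bij_eqon[OF gQ]) (use G(2) in \<open>auto simp: f_def\<close>)
  have bij: "bij_betw f (verts G) (verts H)" unfolding G(1) H(1) by (rule bij_betw_combine[OF b1 b2 H(2)])
  have fP: "x \<in> P \<Longrightarrow> f x \<in> P'" "x \<in> Q \<Longrightarrow> f x \<in> Q'" for x using b1 b2 unfolding bij_betw_def by auto
  show ?thesis
  proof (rule iso_intro[OF bij])
    fix x y assume xy: "x \<in> verts G" "y \<in> verts G"
    have "x \<in> P \<or> x \<in> Q" "y \<in> P \<or> y \<in> Q" using xy G(1) by auto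
    then show "adj G x y \<longleftrightarrow> adj H (f x) (f y)" unfolding G(3) H(3)
      using fP[of x] fP[of y] G(2) H(2) by blast
  qed
qed

lemma SJ_iso:
  assumes S: "SJ G X Y Z" and T: "SJ H X' Y' Z'"
    and fin: "finite X" "finite Y" "finite Z" "finite X'" "finite Y'" "finite Z'"
    and c: "card X = card X'" "card Y = card Y'" "card Z = card Z'"
  shows "isomorphic G H"
proof -
  obtain gX where gX: "bij_betw gX X X'" using bij_part[OF fin(1,4) c(1)] by blast
  obtain gY where gY: "bij_betw gY Y Y'" using bij_part[OF fin(2,5) c(2)] by blast
  obtain gZ where gZ: "bij_betw gZ Z Z'" using bij_part[OF fin(3,6) c(3)] by blast
  have G: "verts G = X \<union> Y \<union> Z" "X \<inter> Y = {}" "X \<inter> Z = {}" "Y \<inter> Z = {}"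
    "\<And>x y. adj G x y \<longleftrightarrow> x \<in> verts G \<and> y \<in> verts G \<and> x \<noteq> y \<and> (x \<in> X \<or> y \<in> X \<or> (x \<in> Y \<and> y \<in> Y))"
    using S unfolding SJ_def by auto
  have H: "verts H = X' \<union> Y' \<union> Z'" "X' \<inter> Y' = {}" "X' \<inter> Z' = {}" "Y' \<inter> Z' = {}"
    "\<And>x y. adj H x y \<longleftrightarrow> x \<in> verts H \<and> y \<in> verts H \<and> x \<noteq> y \<and> (x \<in> X' \<or> y \<in> X' \<or> (x \<in> Y' \<and> y \<in> Y'))"
    using T unfolding SJ_def by auto
  define f where "f = (\<lambda>x. if x \<in> X then gX x else if x \<in> Y then gY x else gZ x)"
  have b1: "bij_betw f X X'" by (rule bij_eqon[OF gX]) (simp add: f_def)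
  have b2: "bij_betw f Y Y'" by (rule bij_eqon[OF gY]) (use G(2) in \<open>auto simp: f_def\<close>)
  have b3: "bij_betw f Z Z'" by (rule bij_eqon[OF gZ]) (use G(3,4) in \<open>auto simp: f_def\<close>)
  have b12: "bij_betw f (X \<union> Y) (X' \<union> Y')" by (rule bij_betw_combine[OF b1 b2 H(2)])
  have bij: "bij_betw f (verts G) (verts H)" unfolding G(1) H(1)
    by (rule bij_betw_combine[OF b12 b3]) (use H(3,4) in auto)
  have fP: "x \<in> X \<Longrightarrow> f x \<in> X'" "x \<in> Y \<Longrightarrow> f x \<in> Y'" "x \<in> Z \<Longrightarrow> f x \<in> Z'" for x
    using b1 b2 b3 unfolding bij_betw_def by auto
  have finj: "x \<in> verts G \<Longrightarrow> y \<in> verts G \<Longrightarrow> f x = f y \<longleftrightarrow> x = y" for x y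
    using bij unfolding bij_betw_def inj_on_def by auto
  have fV: "x \<in> verts G \<Longrightarrow> f x \<in> verts H" for x using bij unfolding bij_betw_def by auto
  show ?thesis
  proof (rule iso_intro[OF bij])
    fix x y assume xy: "x \<in> verts G" "y \<in> verts G"
    have cx: "x \<in> X \<or> x \<in> Y \<or> x \<in> Z" "y \<in> X \<or> y \<in> Y \<or> y \<in> Z" using xy G(1) by auto
    have e1: "(f x \<in> X') = (x \<in> X)" "(f y \<in> X') = (y \<in> X)" "(f x \<in> Y') = (x \<in> Y)" "(f y \<in> Y') = (y \<in> Y)"
      using cx fP[of x] fP[of y] H(2,3,4) by blast+
    show "adj G x y \<longleftrightarrow> adj H (f x) (f y)" unfolding G(5)[of x y] H(5)[of "f x" "f y"]
      using xy fV[OF xy(1)] fV[OF xy(2)] finj[OF xy] e1 by simp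
  qed
qed


lemma S1_sym: "S1 G P Q \<Longrightarrow> S1 G Q P"
  unfolding S1_def by auto

lemma SJ_merge:
  assumes S: "SJ G X Y Z" and f: "finite Y" and c: "card Y \<le> 1"
  shows "SJ G X {} (Y \<union> Z)"
proof -
  have Y1: "\<And>x y. x \<in> Y \<Longrightarrow> y \<in> Y \<Longrightarrow> x = y"
    using f c by (metis One_nat_def card_le_Suc0_iff_eq)
  have H: "verts G = X \<union> Y \<union> Z" "X \<inter> Y = {}" "X \<inter> Z = {}" "Y \<inter> Z = {}"
    "\<And>x y. adj G x y \<longleftrightarrow> x \<in> verts G \<and> y \<in> verts G \<and> x \<noteq> y \<and> (x \<in> X \<or> y \<in> X \<or> (x \<in> Y \<and> y \<in> Y))"
    using S unfolding SJ_def by auto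
  show ?thesis unfolding SJ_def
  proof (intro conjI allI)
    fix x y
    show "adj G x y \<longleftrightarrow> x \<in> verts G \<and> y \<in> verts G \<and> x \<noteq> y \<and> (x \<in> X \<or> y \<in> X \<or> (x \<in> {} \<and> y \<in> {}))"
      unfolding H(5)[of x y] using Y1[of x y] by auto
  qed (use H(1-4) in auto)
qed

lemma S1_card: "simple_graph G \<Longrightarrow> S1 G P Q \<Longrightarrow> order G = card P + card Q"
  using S1_facts[of G P Q] unfolding order_def by (simp add: card_Un_disjoint)

lemma SJ_card: "simple_graph G \<Longrightarrow> SJ G X Y Z \<Longrightarrow> order G = card X + card Y + card Z"
  using SJ_facts[of G X Y Z] unfolding order_def by (simp add: card_Un_disjoint Int_Un_distrib2)

context dimG
begin

lemma no_complete: "\<not> SJ G X {} {c}"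
proof
  assume S: "SJ G X {} {c}"
  obtain x y where xy: "x \<in> V" "y \<in> V" "x \<noteq> y" "\<not> A x y" using noncomplete by blast
  have "x \<in> X \<or> y \<in> X" using S xy unfolding SJ_def by auto
  then have "A x y" using S xy unfolding SJ_def by auto
  then show False using xy by blast
qed

end


theorem proposition2p4:
  fixes G :: "'a graph" and l :: nat
  assumes "simple_graph G"
    and "connected_graph G"
    and "metric_dim G = order G - 2"
    and "order G - 2 \<ge> 2"
    and "l \<ge> 1"
  shows "distinguishing_number G = order G - l \<longleftrightarrow>
     (isomorphic G (complete_bipartite (l + 1) (l + 1))
    \<or> (\<exists>t. t \<ge> l + 1 \<and> isomorphic G (complete_bipartite t l))
    \<or> (\<exists>t. t \<ge> l \<and> isomorphic G (gjoin (complete l) (edgeless t)))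
    \<or> (\<exists>t. t \<ge> l \<and> l \<ge> 2 \<and> isomorphic G (gjoin (complete t) (edgeless l)))
    \<or> (\<exists>t. t \<ge> max 2 (l - 1) \<and>
           isomorphic G (gjoin (complete (l - 1)) (gunion (complete t) (complete 1))))
    \<or> (\<exists>t. t \<ge> max 2 (l - 1) \<and>
           isomorphic G (gjoin (complete t) (gunion (complete (l - 1)) (complete 1)))))"
    (is "?L \<longleftrightarrow> ?R")
proof -
  interpret dimG G using assms(1-4) by unfold_locales
  have sg: "simple_graph G" by (rule assms(1))
  have n4: "order G \<ge> 4" using assms(4) by simp
  have l1: "l \<ge> 1" by (rule assms(5))
  note fin = finite_imageI[OF finite_lessThan]
  have finS: "finite {Inr (Inr (0::nat)) :: nat + (nat + nat)}" by simp
  have finIL: "finite (Inr ` Inl ` {..<t} :: (nat + (nat + nat)) set)" for t by simp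
  show ?thesis
  proof
    assume L: ?L
    from classify show ?R
    proof (elim disjE exE conjE)
      fix P Q assume S: "S1 G P Q"
      note F = S1_facts[OF sg S]
      have n: "order G = card P + card Q" by (rule S1_card[OF sg S])
      show ?R
      proof (cases "card P = card Q")
        case True
        have p1: "card P \<ge> 1" using n n4 True by simp
        have "distinguishing_number G = card P + 1" by (rule D_S1_eq[OF sg S True p1])
        then have cP: "card P = l + 1" using L n True l1 by simp
        have "isomorphic G (complete_bipartite (l + 1) (l + 1))"
          by (rule S1_iso[OF S S1_cb F(3,4) fin fin]) (use cP True in \<open>simp_all add: card_Inl card_Inr\<close>)
        then show ?R by blast
      next
        case False
        have D: "distinguishing_number G = max (card P) (card Q)" by (rule D_S1_neq[OF sg S False])
        show ?R
        proof (cases "card P < card Q")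
          case True
          then have "card P = l" using D L n by simp
          have "isomorphic G (complete_bipartite (card Q) l)"
            by (rule S1_iso[OF S1_sym[OF S] S1_cb F(4,3) fin fin])
              (use \<open>card P = l\<close> in \<open>simp_all add: card_Inl card_Inr\<close>)
          moreover have "card Q \<ge> l + 1" using True \<open>card P = l\<close> by simp
          ultimately show ?R by blast
        next
          case F2: False
          then have "card Q = l" using D L n False by simp
          have "isomorphic G (complete_bipartite (card P) l)"
            by (rule S1_iso[OF S S1_cb F(3,4) fin fin])
              (use \<open>card Q = l\<close> in \<open>simp_all add: card_Inl card_Inr\<close>)
          moreover have "card P \<ge> l + 1" using F2 False \<open>card Q = l\<close> by simp
          ultimately show ?R by blast
        qed
      qed
    next
      fix X Z assume S: "SJ G X {} Z" and z2: "card Z \<ge> 2"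
      note F = SJ_facts[OF sg S]
      have n: "order G = card X + card Z" using SJ_card[OF sg S] by simp
      have "distinguishing_number G = max (card X) (max (card ({}::'a set)) (card Z))"
        by (rule D_SJ[OF sg S]) (use z2 in simp)
      then have D: "distinguishing_number G = max (card X) (card Z)" by simp
      show ?R
      proof (cases "card Z \<ge> card X")
        case True
        then have "card X = l" using D L n z2 by simp
        have "isomorphic G (gjoin (complete l) (edgeless (card Z)))"
          by (rule SJ_iso[OF S SJ_ce F(5,6,7) fin _ fin])
            (use \<open>card X = l\<close> in \<open>simp_all add: card_Inl card_Inr\<close>)
        moreover have "card Z \<ge> l" using True \<open>card X = l\<close> by simp
        ultimately show ?R by blast
      next
        case False
        then have "card Z = l" using D L n by simp
        have "isomorphic G (gjoin (complete (card X)) (edgeless l))"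
          by (rule SJ_iso[OF S SJ_ce F(5,6,7) fin _ fin])
            (use \<open>card Z = l\<close> in \<open>simp_all add: card_Inl card_Inr\<close>)
        moreover have "card X \<ge> l" "l \<ge> 2" using False \<open>card Z = l\<close> z2 by simp_all
        ultimately show ?R by blast
      qed
    next
      fix X Y c assume S: "SJ G X Y {c}" and y2: "card Y \<ge> 2"
      note F = SJ_facts[OF sg S]
      have n: "order G = card X + card Y + 1" using SJ_card[OF sg S] by simp
      have "distinguishing_number G = max (card X) (max (card Y) (card {c}))"
        by (rule D_SJ[OF sg S]) (use y2 in simp)
      then have D: "distinguishing_number G = max (card X) (card Y)" using y2 by simp
      show ?R
      proof (cases "card Y \<ge> card X")
        case True
        then have "card X = l - 1" using D L n y2 by simp
        have "isomorphic G (gjoin (complete (l - 1)) (gunion (complete (card Y)) (complete 1)))"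
          by (rule SJ_iso[OF S SJ_ccu F(5,6,7) fin finIL finS])
            (use \<open>card X = l - 1\<close> in \<open>simp_all add: card_Inl card_InrInl\<close>)
        moreover have "card Y \<ge> max 2 (l - 1)" using True \<open>card X = l - 1\<close> y2 by simp
        ultimately show ?R by blast
      next
        case False
        then have "card Y = l - 1" using D L n y2 by simp
        have "isomorphic G (gjoin (complete (card X)) (gunion (complete (l - 1)) (complete 1)))"
          by (rule SJ_iso[OF S SJ_ccu F(5,6,7) fin finIL finS])
            (use \<open>card Y = l - 1\<close> in \<open>simp_all add: card_Inl card_InrInl\<close>)
        moreover have "card X \<ge> max 2 (l - 1)" using False \<open>card Y = l - 1\<close> y2 by simp
        ultimately show ?R by blast
      qed
    qed
  next
    assume R: ?R
    then show ?L
    proof (elim disjE exE conjE)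
      assume "isomorphic G (complete_bipartite (l + 1) (l + 1))"
      then obtain P Q where S: "S1 G P Q" "card P = l + 1" "card Q = l + 1"
        using iso_S1[OF sg _ S1_cb] by (fastforce simp: card_Inl card_Inr)
      have "distinguishing_number G = card P + 1" by (rule D_S1_eq[OF sg S(1)]) (use S in simp_all)
      then show ?L using S1_card[OF sg S(1)] S by simp
    next
      fix t assume t: "t \<ge> l + 1" "isomorphic G (complete_bipartite t l)"
      then obtain P Q where S: "S1 G P Q" "card P = t" "card Q = l"
        using iso_S1[OF sg _ S1_cb] by (fastforce simp: card_Inl card_Inr)
      have "distinguishing_number G = max (card P) (card Q)" by (rule D_S1_neq[OF sg S(1)]) (use S t in simp_all)
      then show ?L using S1_card[OF sg S(1)] S t by simp
    next
      fix t assume t: "t \<ge> l" "isomorphic G (gjoin (complete l) (edgeless t))"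
      then obtain X Y Z where S: "SJ G X Y Z" "card X = l" "card Z = t" "Y = {}"
        using iso_SJ[OF sg _ SJ_ce] by (fastforce simp: card_Inl card_Inr)
      have n: "order G = l + t" using SJ_card[OF sg S(1)] S by simp
      then have t2: "t \<ge> 2" using n4 t by simp
      have "distinguishing_number G = max (card X) (max (card Y) (card Z))"
        by (rule D_SJ[OF sg S(1)]) (use S t2 in simp)
      then show ?L using n S t by simp
    next
      fix t assume t: "t \<ge> l" "l \<ge> 2" "isomorphic G (gjoin (complete t) (edgeless l))"
      then obtain X Y Z where S: "SJ G X Y Z" "card X = t" "card Z = l" "Y = {}"
        using iso_SJ[OF sg _ SJ_ce] by (fastforce simp: card_Inl card_Inr)
      have n: "order G = t + l" using SJ_card[OF sg S(1)] S by simp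
      have "distinguishing_number G = max (card X) (max (card Y) (card Z))"
        by (rule D_SJ[OF sg S(1)]) (use S t in simp)
      then show ?L using n S t by simp
    next
      fix t assume t: "t \<ge> max 2 (l - 1)" "isomorphic G (gjoin (complete (l - 1)) (gunion (complete t) (complete 1)))"
      then obtain X Y Z where S: "SJ G X Y Z" "card X = l - 1" "card Y = t" "card Z = 1"
        using iso_SJ[OF sg _ SJ_ccu] by (fastforce simp: card_Inl card_InrInl)
      have n: "order G = l + t" using SJ_card[OF sg S(1)] S l1 by simp
      have "distinguishing_number G = max (card X) (max (card Y) (card Z))"
        by (rule D_SJ[OF sg S(1)]) (use S t in simp)
      then show ?L using n S t by simp
    next
      fix t assume t: "t \<ge> max 2 (l - 1)" "isomorphic G (gjoin (complete t) (gunion (complete (l - 1)) (complete 1)))"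
      obtain X Y Z where S0: "SJ G X Y Z" "card X = card (Inl ` {..<t} :: (nat + (nat + nat)) set)"
        "card Y = card (Inr ` Inl ` {..<l - 1} :: (nat + (nat + nat)) set)" "card Z = card {Inr (Inr 0) :: nat + (nat + nat)}"
        "(Inr ` Inl ` {..<l - 1} :: (nat + (nat + nat)) set) = {} \<longrightarrow> Y = {}"
        using iso_SJ[OF sg t(2) SJ_ccu] by blast
      have S: "SJ G X Y Z" "card X = t" "card Y = l - 1" "card Z = 1" "l - 1 = 0 \<longrightarrow> Y = {}"
        using S0 by (simp_all only: card_Inl card_InrInl) auto
      note F = SJ_facts[OF sg S(1)]
      have n: "order G = t + l" using SJ_card[OF sg S(1)] S l1 by simp
      obtain c where Zc: "Z = {c}" using S(4) card_1_singletonE by blast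
      show ?L
      proof (cases "l - 1 \<ge> 2")
        case True
        have "distinguishing_number G = max (card X) (max (card Y) (card Z))"
          by (rule D_SJ[OF sg S(1)]) (use S True in simp)
        then show ?L using n S t True by simp
      next
        case False
        show ?L
        proof (cases "l - 1 = 1")
          case True
          have S2: "SJ G X {} (Y \<union> Z)" by (rule SJ_merge[OF S(1) F(6)]) (use S True in simp)
          have cYZ: "card (Y \<union> Z) = 2" using S True F(4,6,7) by (simp add: card_Un_disjoint)
          have "distinguishing_number G = max (card X) (max (card ({}::'a set)) (card (Y \<union> Z)))"
            by (rule D_SJ[OF sg S2]) (use cYZ in simp)
          then show ?L using n S t True cYZ by simp
        next
          case F2: False
          then have "Y = {}" using False S(5) by simp
          then show ?L using no_complete S(1) Zc by blast
        qed
      qed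
    qed
  qed
qed


end
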